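(* Let $G,H$ be finite simple graphs. Then the Euler characteristic of the strong product is multiplicative: $\chi(G*H)=\chi(G)\,\chi(H)$.
   Context: The Euler characteristic of a finite simple graph is $\chi(G)=\sum_{k\ge0}(-1)^k f_k(G)$, where $f_k(G)$ is the number of complete subgraphs of $G$ with $k+1$ vertices. The strong product $G*H$ has vertex set $V(G)\times V(H)$, and two distinct vertices $(a,b),(c,d)$ are adjacent iff ($a=c$ or $a$ is adjacent to $c$ in $G$) and ($b=d$ or $b$ is adjacent to $d$ in $H$). *)

theory Defs
  imports Main
begin

definition simple_graph :: "'a set \<Rightarrow> ('a \<Rightarrow> 'a \<Rightarrow> bool) \<Rightarrow> bool" where
  "simple_graph V E \<longleftrightarrow> finite V \<and> (\<forall>x y. E x y \<longrightarrow> x \<in> V \<and> y \<in> V)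
     \<and> (\<forall>x. \<not> E x x) \<and> (\<forall>x y. E x y \<longrightarrow> E y x)"

definition cliques :: "'a set \<Rightarrow> ('a \<Rightarrow> 'a \<Rightarrow> bool) \<Rightarrow> nat \<Rightarrow> 'a set set" where
  "cliques V E k = {C. C \<subseteq> V \<and> card C = k + 1 \<and> (\<forall>x\<in>C. \<forall>y\<in>C. x \<noteq> y \<longrightarrow> E x y)}"

definition f_vec :: "'a set \<Rightarrow> ('a \<Rightarrow> 'a \<Rightarrow> bool) \<Rightarrow> nat \<Rightarrow> nat" where
  "f_vec V E k = card (cliques V E k)"

text \<open>Euler characteristic; complete subgraphs have at most card V vertices,
so the sum over k \<le> card V is the full (finite) sum.\<close>

definition euler_char :: "'a set \<Rightarrow> ('a \<Rightarrow> 'a \<Rightarrow> bool) \<Rightarrow> int" where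
  "euler_char V E = (\<Sum>k\<le>card V. (-1) ^ k * int (f_vec V E k))"

definition strong_prod_edges ::
  "('a \<Rightarrow> 'a \<Rightarrow> bool) \<Rightarrow> ('b \<Rightarrow> 'b \<Rightarrow> bool) \<Rightarrow> ('a \<times> 'b) \<Rightarrow> ('a \<times> 'b) \<Rightarrow> bool" where
  "strong_prod_edges E F p q \<longleftrightarrow> p \<noteq> q
     \<and> (fst p = fst q \<or> E (fst p) (fst q)) \<and> (snd p = snd q \<or> F (snd p) (snd q))"

end

theory Submission imports Defs begin

lemma pow_alt_zero:
  assumes "finite A" "A \<noteq> {}"
  shows "(\<Sum>S\<in>Pow A. (-1::int) ^ card S) = 0"
proof -
  have "{} \<subset> A" using assms by auto
  from card_subsupersets_even_odd[OF assms(1) this]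
  have "card {T. T \<subseteq> A \<and> even (card T)} = card {T. T \<subseteq> A \<and> odd (card T)}" by simp
  then show ?thesis
    by (intro sum_alternating_cancels) (auto simp: assms(1) Pow_def)
qed

lemma pow_nonempty_alt:
  assumes "finite A" "A \<noteq> {}"
  shows "(\<Sum>S\<in>Pow A - {{}}. (-1::int) ^ card S) = -1"
proof -
  have "(\<Sum>S\<in>Pow A. (-1::int) ^ card S) = (\<Sum>S\<in>Pow A - {{}}. (-1::int) ^ card S) + 1"
    using assms(1) by (subst sum.remove[of _ "{}"]) auto
  then show ?thesis using pow_alt_zero[OF assms] by simp
qed

definition RS :: "'a set \<Rightarrow> 'b set \<Rightarrow> ('a \<times> 'b) set set" where
  "RS A B = {K. K \<subseteq> A \<times> B \<and> snd ` K = B}"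

definition SS :: "'a set \<Rightarrow> 'b set \<Rightarrow> ('a \<times> 'b) set set" where
  "SS A B = {K. K \<subseteq> A \<times> B \<and> fst ` K = A \<and> snd ` K = B}"

lemma RS_finite: "finite A \<Longrightarrow> finite B \<Longrightarrow> finite (RS A B)"
  by (rule finite_subset[of _ "Pow (A \<times> B)"]) (auto simp: RS_def)

lemma SS_finite: "finite A \<Longrightarrow> finite B \<Longrightarrow> finite (SS A B)"
  by (rule finite_subset[of _ "Pow (A \<times> B)"]) (auto simp: SS_def)

lemma R_value:
  assumes "finite B" "finite A" "A \<noteq> {}"
  shows "(\<Sum>K\<in>RS A B. (-1::int) ^ card K) = (-1) ^ card B"
  using assms(1)
proof (induction B rule: finite_induct)
  case empty
  have e: "RS A {} = {{}}" by (auto simp: RS_def)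
  show ?case unfolding e by simp
next
  case (insert b B)
  let ?h = "\<lambda>(K0, S). K0 \<union> S \<times> {b}"
  have bij: "bij_betw ?h (RS A B \<times> (Pow A - {{}})) (RS A (insert b B))"
  proof (rule bij_betw_byWitness[where f' = "\<lambda>K. ({p\<in>K. snd p \<noteq> b}, {a. (a,b) \<in> K})"])
    show "\<forall>x\<in>RS A B \<times> (Pow A - {{}}). ({p \<in> ?h x. snd p \<noteq> b}, {a. (a, b) \<in> ?h x}) = x"
      using insert.hyps(2) by (auto simp: RS_def)
    show "\<forall>K\<in>RS A (insert b B). ?h ({p\<in>K. snd p \<noteq> b}, {a. (a,b) \<in> K}) = K"
      by (auto simp: RS_def)
    show "?h ` (RS A B \<times> (Pow A - {{}})) \<subseteq> RS A (insert b B)"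
    proof -
      have "K0 \<union> S \<times> {b} \<in> RS A (insert b B)" if h: "K0 \<subseteq> A \<times> B" "snd ` K0 = B" "S \<subseteq> A" "S \<noteq> {}" for K0 S
      proof -
        from h obtain a where "a \<in> S" by auto
        then have "(a,b) \<in> K0 \<union> S \<times> {b}" by auto
        then have "b \<in> snd ` (K0 \<union> S \<times> {b})" by force
        moreover have "snd ` (K0 \<union> S \<times> {b}) \<subseteq> insert b B" using h by auto
        moreover have "B \<subseteq> snd ` (K0 \<union> S \<times> {b})" using h by auto
        ultimately show ?thesis using h by (auto simp: RS_def)
      qed
      note * = this
      show ?thesis
      proof
        fix x assume "x \<in> ?h ` (RS A B \<times> (Pow A - {{}}))"
        then obtain K0 S where "x = K0 \<union> S \<times> {b}" "K0 \<in> RS A B" "S \<in> Pow A - {{}}" by auto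
        note xx = this
        then have "K0 \<subseteq> A \<times> B" "snd ` K0 = B" "S \<subseteq> A" "S \<noteq> {}" by (auto simp: RS_def)
        from *[OF this] xx(1) show "x \<in> RS A (insert b B)" by simp
      qed
    qed
    show "(\<lambda>K. ({p\<in>K. snd p \<noteq> b}, {a. (a,b) \<in> K})) ` RS A (insert b B) \<subseteq> RS A B \<times> (Pow A - {{}})"
    proof -
      have "({p\<in>K. snd p \<noteq> b}, {a. (a,b) \<in> K}) \<in> RS A B \<times> (Pow A - {{}})"
        if h: "K \<subseteq> A \<times> insert b B" "snd ` K = insert b B" for K
      proof -
        have "b \<in> snd ` K" using h by auto
        then obtain p where "p \<in> K" "snd p = b" by auto
        then have ne: "{a. (a,b) \<in> K} \<noteq> {}" by (cases p) auto
        have "snd ` {p\<in>K. snd p \<noteq> b} = B"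
        proof
          show "snd ` {p\<in>K. snd p \<noteq> b} \<subseteq> B" using h by auto
          show "B \<subseteq> snd ` {p\<in>K. snd p \<noteq> b}"
          proof
            fix c assume "c \<in> B"
            then have "c \<in> snd ` K" "c \<noteq> b" using h insert.hyps(2) by auto
            then show "c \<in> snd ` {p\<in>K. snd p \<noteq> b}" by auto
          qed
        qed
        then show ?thesis using h ne by (auto simp: RS_def)
      qed
      note * = this
      show ?thesis
      proof
        fix x assume "x \<in> (\<lambda>K. ({p\<in>K. snd p \<noteq> b}, {a. (a,b) \<in> K})) ` RS A (insert b B)"
        then obtain K where xx: "x = ({p\<in>K. snd p \<noteq> b}, {a. (a,b) \<in> K})" "K \<in> RS A (insert b B)" by auto
        then have "K \<subseteq> A \<times> insert b B" "snd ` K = insert b B" by (auto simp: RS_def)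
        from *[OF this] xx(1) show "x \<in> RS A B \<times> (Pow A - {{}})" by simp
      qed
    qed
  qed
  have card: "card (?h x) = card (fst x) + card (snd x)" if "x \<in> RS A B \<times> (Pow A - {{}})" for x
  proof -
    obtain K0 S where x: "x = (K0, S)" by force
    have "finite K0" using that x \<open>finite B\<close> assms(2) by (auto simp: RS_def intro: finite_subset)
    moreover have "finite S" using that x assms(2) by (auto intro: finite_subset)
    moreover have "K0 \<inter> S \<times> {b} = {}" using that x insert.hyps(2) by (auto simp: RS_def)
    moreover have "card (S \<times> {b}) = card S" by (simp add: card_cartesian_product)
    ultimately show ?thesis using x by (simp add: card_Un_disjoint)
  qed
  have "(\<Sum>K\<in>RS A (insert b B). (-1::int) ^ card K) = (\<Sum>x\<in>RS A B \<times> (Pow A - {{}}). (-1::int) ^ card (?h x))"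
    using sum.reindex_bij_betw[OF bij, of "\<lambda>K. (-1::int) ^ card K"] by simp
  also have "\<dots> = (\<Sum>x\<in>RS A B \<times> (Pow A - {{}}). (-1::int) ^ card (fst x) * (-1) ^ card (snd x))"
    by (rule sum.cong) (simp_all add: card power_add)
  also have "\<dots> = (\<Sum>K\<in>RS A B. (-1::int) ^ card K) * (\<Sum>S\<in>Pow A - {{}}. (-1::int) ^ card S)"
    by (simp add: sum_product sum.cartesian_product split_def)
  also have "\<dots> = (-1) ^ card (insert b B)"
    using insert pow_nonempty_alt[OF assms(2,3)] by simp
  finally show ?case .
qed

lemma R_group:
  assumes "finite A" "finite B"
  shows "(\<Sum>K\<in>RS A B. (-1::int) ^ card K) = (\<Sum>A'\<in>Pow A. \<Sum>K\<in>SS A' B. (-1::int) ^ card K)"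
proof -
  have "(\<Sum>K\<in>RS A B. (-1::int) ^ card K) = (\<Sum>A'\<in>Pow A. \<Sum>K\<in>{K. K \<in> RS A B \<and> fst ` K = A'}. (-1::int) ^ card K)"
    by (rule sum.group[symmetric]) (use assms in \<open>auto simp: RS_finite RS_def\<close>)
  also have "\<dots> = (\<Sum>A'\<in>Pow A. \<Sum>K\<in>SS A' B. (-1::int) ^ card K)"
  proof (rule sum.cong[OF refl])
    fix A' assume "A' \<in> Pow A"
    then have "{K. K \<in> RS A B \<and> fst ` K = A'} = SS A' B"
      by (auto simp: RS_def SS_def) force+
    then show "(\<Sum>K\<in>{K. K \<in> RS A B \<and> fst ` K = A'}. (-1::int) ^ card K) = (\<Sum>K\<in>SS A' B. (-1::int) ^ card K)"
      by simp
  qed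
  finally show ?thesis .
qed

lemma S_value:
  assumes "finite A" "finite B" "B \<noteq> {}"
  shows "(\<Sum>K\<in>SS A B. (-1::int) ^ card K) = (if A = {} then 0 else - ((-1) ^ (card A + card B)))"
  using assms(1)
proof (induction A rule: finite_psubset_induct)
  case (psubset A)
  show ?case
  proof (cases "A = {}")
    case True
    have "SS A B = {}" using True assms(3) by (auto simp: SS_def)
    then show ?thesis using True by simp
  next
    case False
    let ?s = "\<lambda>A'. (\<Sum>K\<in>SS A' B. (-1::int) ^ card K)"
    have "(-1) ^ card B = (\<Sum>A'\<in>Pow A. ?s A')"
      using R_value[OF assms(2) psubset.hyps False] R_group[OF psubset.hyps assms(2)] by simp
    also have "\<dots> = ?s A + (\<Sum>A'\<in>Pow A - {A}. ?s A')"
      using psubset.hyps by (subst sum.remove[of _ A]) auto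
    also have "(\<Sum>A'\<in>Pow A - {A}. ?s A') = (\<Sum>A'\<in>Pow A - {A}. - ((-1) ^ card B) * (-1) ^ card A' + (if {} = A' then (-1) ^ card B else 0))"
    proof (rule sum.cong[OF refl])
      fix A' assume "A' \<in> Pow A - {A}"
      then have "A' \<subset> A" by auto
      from psubset.IH[OF this] show "?s A' = - ((-1) ^ card B) * (-1) ^ card A' + (if {} = A' then (-1) ^ card B else 0)"
        by (auto simp: power_add)
    qed
    also have "\<dots> = - ((-1) ^ card B) * (\<Sum>A'\<in>Pow A - {A}. (-1) ^ card A') + (-1) ^ card B"
      unfolding sum.distrib sum_distrib_left[symmetric] using False psubset.hyps by (simp add: sum.delta)
    also have "(\<Sum>A'\<in>Pow A - {A}. (-1::int) ^ card A') = - ((-1) ^ card A)"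
    proof -
      have "(\<Sum>A'\<in>Pow A. (-1::int) ^ card A') = (-1) ^ card A + (\<Sum>A'\<in>Pow A - {A}. (-1::int) ^ card A')"
        using psubset.hyps by (subst sum.remove[of _ A]) auto
      then show ?thesis using pow_alt_zero[OF psubset.hyps False] by simp
    qed
    finally show ?thesis using False by (simp add: power_add algebra_simps eq_neg_iff_add_eq_0)
  qed
qed

definition clset :: "'a set \<Rightarrow> ('a \<Rightarrow> 'a \<Rightarrow> bool) \<Rightarrow> 'a set set" where
  "clset V E = {C. C \<subseteq> V \<and> C \<noteq> {} \<and> (\<forall>x\<in>C. \<forall>y\<in>C. x \<noteq> y \<longrightarrow> E x y)}"

definition TT :: "'a set \<Rightarrow> ('a \<Rightarrow> 'a \<Rightarrow> bool) \<Rightarrow> int" where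
  "TT V E = (\<Sum>C\<in>clset V E. (-1) ^ card C)"

lemma clset_finite: "finite V \<Longrightarrow> finite (clset V E)"
  by (rule finite_subset[of _ "Pow V"]) (auto simp: clset_def)

lemma euler_TT:
  assumes "finite V"
  shows "euler_char V E = - TT V E"
proof -
  have "TT V E = (\<Sum>k\<in>{..card V}. \<Sum>C\<in>{C. C \<in> clset V E \<and> card C - 1 = k}. (-1::int) ^ card C)"
    unfolding TT_def
  proof (rule sum.group[symmetric])
    show "finite (clset V E)" using assms by (rule clset_finite)
    show "finite {..card V}" by simp
    show "(\<lambda>C. card C - 1) ` clset V E \<subseteq> {..card V}"
      using assms by (auto simp: clset_def intro!: le_trans[OF _ card_mono[OF assms]] diff_le_self)
  qed
  also have "\<dots> = (\<Sum>k\<in>{..card V}. - ((-1) ^ k * int (f_vec V E k)))"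
  proof (rule sum.cong[OF refl])
    fix k
    have eq: "{C. C \<in> clset V E \<and> card C - 1 = k} = cliques V E k"
    proof -
      have "C \<noteq> {} \<and> card C - 1 = k \<longleftrightarrow> card C = k + 1" if "C \<subseteq> V" for C
      proof -
        have "finite C" using that assms finite_subset by blast
        then have h: "(C \<noteq> {}) = (0 < card C)" by (simp add: card_gt_0_iff)
        show ?thesis unfolding h by arith
      qed
      then show ?thesis unfolding clset_def cliques_def by blast
    qed
    show "(\<Sum>C\<in>{C. C \<in> clset V E \<and> card C - 1 = k}. (-1::int) ^ card C) = - ((-1) ^ k * int (f_vec V E k))"
      unfolding eq f_vec_def
    proof -
      have "(\<Sum>C\<in>cliques V E k. (-1::int) ^ card C) = (\<Sum>C\<in>cliques V E k. (-1::int) ^ (k + 1))"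
        by (rule sum.cong) (auto simp: cliques_def)
      then show "(\<Sum>C\<in>cliques V E k. (-1::int) ^ card C) = - ((-1) ^ k * int (card (cliques V E k)))"
        by simp
    qed
  qed
  also have "\<dots> = - euler_char V E"
    unfolding euler_char_def by (simp add: sum_negf)
  finally show ?thesis by simp
qed

lemma prod_clique_proj:
  assumes "K \<in> clset (V \<times> W) (strong_prod_edges E F)"
  shows "fst ` K \<in> clset V E" "snd ` K \<in> clset W F"
proof -
  have K: "K \<subseteq> V \<times> W" "K \<noteq> {}" "\<And>p q. p \<in> K \<Longrightarrow> q \<in> K \<Longrightarrow> p \<noteq> q \<Longrightarrow> strong_prod_edges E F p q"
    using assms by (auto simp: clset_def)
  show "fst ` K \<in> clset V E"
    unfolding clset_def
  proof (intro CollectI conjI ballI impI)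
    show "fst ` K \<subseteq> V" using K by auto
    show "fst ` K \<noteq> {}" using K by auto
    fix x y assume "x \<in> fst ` K" "y \<in> fst ` K" "x \<noteq> y"
    then obtain p q where "p \<in> K" "q \<in> K" "fst p = x" "fst q = y" by auto
    with K(3)[of p q] \<open>x \<noteq> y\<close> show "E x y" by (auto simp: strong_prod_edges_def)
  qed
  show "snd ` K \<in> clset W F"
    unfolding clset_def
  proof (intro CollectI conjI ballI impI)
    show "snd ` K \<subseteq> W" using K by auto
    show "snd ` K \<noteq> {}" using K by auto
    fix x y assume "x \<in> snd ` K" "y \<in> snd ` K" "x \<noteq> y"
    then obtain p q where "p \<in> K" "q \<in> K" "snd p = x" "snd q = y" by auto
    with K(3)[of p q] \<open>x \<noteq> y\<close> show "F x y" by (auto simp: strong_prod_edges_def)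
  qed
qed

lemma SS_in_prod:
  assumes "A \<in> clset V E" "B \<in> clset W F" "K \<in> SS A B"
  shows "K \<in> clset (V \<times> W) (strong_prod_edges E F)"
proof -
  have A: "A \<subseteq> V" "A \<noteq> {}" "\<And>x y. x \<in> A \<Longrightarrow> y \<in> A \<Longrightarrow> x \<noteq> y \<Longrightarrow> E x y"
    using assms(1) by (auto simp: clset_def)
  have B: "B \<subseteq> W" "\<And>x y. x \<in> B \<Longrightarrow> y \<in> B \<Longrightarrow> x \<noteq> y \<Longrightarrow> F x y"
    using assms(2) by (auto simp: clset_def)
  have K: "K \<subseteq> A \<times> B" "fst ` K = A" using assms(3) by (auto simp: SS_def)
  show ?thesis
    unfolding clset_def
  proof (intro CollectI conjI ballI impI)
    show "K \<subseteq> V \<times> W" using K A B by auto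
    show "K \<noteq> {}" using K A by auto
    fix p q assume "p \<in> K" "q \<in> K" "p \<noteq> q"
    then have "fst p \<in> A" "fst q \<in> A" "snd p \<in> B" "snd q \<in> B" using K by auto
    then show "strong_prod_edges E F p q"
      using A(3)[of "fst p" "fst q"] B(2)[of "snd p" "snd q"] \<open>p \<noteq> q\<close>
      by (auto simp: strong_prod_edges_def)
  qed
qed

theorem mainTheorem5:
  fixes V :: "'a set" and E :: "'a \<Rightarrow> 'a \<Rightarrow> bool"
    and W :: "'b set" and F :: "'b \<Rightarrow> 'b \<Rightarrow> bool"
  assumes "simple_graph V E" and "simple_graph W F"
  shows "euler_char (V \<times> W) (strong_prod_edges E F) = euler_char V E * euler_char W F"
proof -
  have fV: "finite V" and fW: "finite W" using assms by (auto simp: simple_graph_def)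
  let ?P = "clset (V \<times> W) (strong_prod_edges E F)"
  have "TT (V \<times> W) (strong_prod_edges E F)
      = (\<Sum>AB\<in>clset V E \<times> clset W F. \<Sum>K\<in>{K. K \<in> ?P \<and> (fst ` K, snd ` K) = AB}. (-1::int) ^ card K)"
    unfolding TT_def
  proof (rule sum.group[symmetric])
    show "finite ?P" using fV fW by (intro clset_finite) auto
    show "finite (clset V E \<times> clset W F)" using fV fW by (auto intro: clset_finite)
    show "(\<lambda>K. (fst ` K, snd ` K)) ` ?P \<subseteq> clset V E \<times> clset W F"
      using prod_clique_proj by blast
  qed
  also have "\<dots> = (\<Sum>AB\<in>clset V E \<times> clset W F. - ((-1) ^ card (fst AB) * (-1) ^ card (snd AB)))"
  proof (rule sum.cong[OF refl])
    fix AB assume AB: "AB \<in> clset V E \<times> clset W F"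
    obtain A B where AB': "AB = (A, B)" by force
    have A: "A \<in> clset V E" and B: "B \<in> clset W F" using AB AB' by auto
    have eq: "{K. K \<in> ?P \<and> (fst ` K, snd ` K) = AB} = SS A B"
    proof
      show "{K. K \<in> ?P \<and> (fst ` K, snd ` K) = AB} \<subseteq> SS A B"
        using AB' by (auto simp: SS_def) force+
      show "SS A B \<subseteq> {K. K \<in> ?P \<and> (fst ` K, snd ` K) = AB}"
        using SS_in_prod[OF A B] AB' by (auto simp: SS_def)
    qed
    have fA: "finite A" "A \<noteq> {}" using A fV by (auto simp: clset_def intro: finite_subset)
    have fB: "finite B" "B \<noteq> {}" using B fW by (auto simp: clset_def intro: finite_subset)
    show "(\<Sum>K\<in>{K. K \<in> ?P \<and> (fst ` K, snd ` K) = AB}. (-1::int) ^ card K) = - ((-1) ^ card (fst AB) * (-1) ^ card (snd AB))"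
      unfolding eq using S_value[OF fA(1) fB] fA(2) AB' by (simp add: power_add)
  qed
  also have "\<dots> = - (TT V E * TT W F)"
    unfolding TT_def sum_product sum.cartesian_product sum_negf by (simp add: split_def)
  finally have "TT (V \<times> W) (strong_prod_edges E F) = - (TT V E * TT W F)" .
  moreover have "finite (V \<times> W)" using fV fW by simp
  ultimately show ?thesis using euler_TT[OF fV, of E] euler_TT[OF fW, of F] euler_TT[of "V \<times> W" "strong_prod_edges E F"] by simp
qed

end
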